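(* Let $A\in\mathrm{SGL}_n(\mathbb{F}_2)$ and let $\mathbf{x}_1,\ldots,\mathbf{x}_r\in\mathbb{F}_2^n$ be linearly independent, $2\le r\le n$, such that $[\mathbf{x}_i^{\top}A^{-1}\mathbf{x}_j]_{i,j=1}^r$ has rank one and trace zero, and $\mathbf{x}_i^{\top}A^{-1}\mathbf{x}_j=0$ for some $i,j$. (i) For every even $k\in\{2,\ldots,r-1\}$ there exist linearly independent $\mathbf{y}_1,\ldots,\mathbf{y}_r\in\mathbb{F}_2^n$ and a permutation matrix $Q\in GL_r(\mathbb{F}_2)$ such that $\sum_{i=1}^r\mathbf{x}_i\mathbf{x}_i^{\top}=\sum_{i=1}^r\mathbf{y}_i\mathbf{y}_i^{\top}$, $\sum_{i=1}^r\mathbf{x}_i=\sum_{i=1}^r\mathbf{y}_i$, and $[\mathbf{y}_i^{\top}A^{-1}\mathbf{y}_j]_{i,j=1}^r=Q\begin{pmatrix}J_{k\times k}&O\\O&O\end{pmatrix}Q^{\top}$. (ii) If $\sum_{i=1}^r\mathbf{x}_i\mathbf{x}_i^{\top}=\sum_{i=1}^r\mathbf{y}_i\mathbf{y}_i^{\top}$ for some $\mathbf{y}_1,\ldots,\mathbf{y}_r\in\mathbb{F}_2^n$, then $[\mathbf{y}_i^{\top}A^{-1}\mathbf{y}_j]_{i,j=1}^r$ has rank one and trace zero, and $\mathbf{y}_{i'}^{\top}A^{-1}\mathbf{y}_{j'}=0$ for some $i',j'$.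
   Context: $\mathrm{SGL}_n(\mathbb{F}_2)$ is the set of invertible symmetric $n\times n$ matrices over the binary field $\mathbb{F}_2$; $J_{k\times k}$ is the all-ones matrix. *)

theory Defs
  imports "HOL-Library.Z2" "Jordan_Normal_Form.DL_Rank" "HOL-Combinatorics.Permutations"
begin

text \<open>The binary field F_2 is the type bit. Vectors in F_2^n are
  bit vec in carrier_vec n, n x n matrices are bit mat in carrier_mat n n.\<close>

definition inv_of :: "nat \<Rightarrow> bit mat \<Rightarrow> bit mat" where
  "inv_of n A = (SOME B. B \<in> carrier_mat n n \<and> A * B = 1\<^sub>m n \<and> B * A = 1\<^sub>m n)"

definition SGL :: "nat \<Rightarrow> bit mat set" where
  "SGL n = {A. A \<in> carrier_mat n n \<and> transpose_mat A = A \<and> invertible_mat A}"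

definition lin_indep_family :: "nat \<Rightarrow> nat \<Rightarrow> (nat \<Rightarrow> bit vec) \<Rightarrow> bool" where
  "lin_indep_family n r x \<longleftrightarrow> (\<forall>i<r. x i \<in> carrier_vec n) \<and> inj_on x {..<r} \<and>
     \<not> module.lin_dep (class_ring :: bit ring) (module_vec TYPE(bit) n) (x ` {..<r})"

definition gram :: "nat \<Rightarrow> bit mat \<Rightarrow> nat \<Rightarrow> (nat \<Rightarrow> bit vec) \<Rightarrow> bit mat" where
  "gram n A r x = mat r r (\<lambda>(i,j). x i \<bullet> (inv_of n A *\<^sub>v x j))"

definition outer_sum :: "nat \<Rightarrow> nat \<Rightarrow> (nat \<Rightarrow> bit vec) \<Rightarrow> bit mat" where
  "outer_sum n r x = mat n n (\<lambda>(a,b). \<Sum>i<r. x i $ a * x i $ b)"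

definition vec_sum :: "nat \<Rightarrow> nat \<Rightarrow> (nat \<Rightarrow> bit vec) \<Rightarrow> bit vec" where
  "vec_sum n r x = vec n (\<lambda>a. \<Sum>i<r. x i $ a)"

definition mat_trace :: "'a::comm_ring_1 mat \<Rightarrow> 'a" where
  "mat_trace M = (\<Sum>i<dim_row M. M $$ (i,i))"

definition mat_rank :: "bit mat \<Rightarrow> nat" where
  "mat_rank M = vec_space.rank (dim_row M) M"

definition permutation_mat :: "nat \<Rightarrow> bit mat \<Rightarrow> bool" where
  "permutation_mat r Q \<longleftrightarrow> (\<exists>p. p permutes {..<r} \<and> Q = mat r r (\<lambda>(i,j). if i = p j then 1 else 0))"

definition J_block :: "nat \<Rightarrow> nat \<Rightarrow> bit mat" where
  "J_block r k = four_block_mat (mat k k (\<lambda>_. 1)) (0\<^sub>m k (r - k)) (0\<^sub>m (r - k) k) (0\<^sub>m (r - k) (r - k))"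

end

theory Submission
  imports Defs
begin


declare add_bit_eq_xor[simp del] mult_bit_eq_and[simp del]

lemma bit_mult_self[simp]: "(a::bit) * a = a" by (cases a) auto
lemma bit_add_self[simp]: "(a::bit) + a = 0" by (cases a) auto

lemma inv_of_props:
  assumes "A \<in> SGL n"
  shows "inv_of n A \<in> carrier_mat n n" "A * inv_of n A = 1\<^sub>m n" "inv_of n A * A = 1\<^sub>m n"
    "transpose_mat (inv_of n A) = inv_of n A"
proof -
  from assms have A: "A \<in> carrier_mat n n" "transpose_mat A = A" "invertible_mat A" by (auto simp: SGL_def)
  then obtain B where AB: "A * B = 1\<^sub>m n" and BA: "B * A = 1\<^sub>m (dim_row B)"
    unfolding invertible_mat_def inverts_mat_def by auto
  have "dim_col B = n" using arg_cong[OF AB, of dim_col] by simp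
  moreover have "dim_row B = n" using arg_cong[OF BA, of dim_col] A(1) by simp
  ultimately have "B \<in> carrier_mat n n" by auto
  with AB BA have "\<exists>B. B \<in> carrier_mat n n \<and> A * B = 1\<^sub>m n \<and> B * A = 1\<^sub>m n" by auto
  from someI_ex[OF this] have B: "inv_of n A \<in> carrier_mat n n" "A * inv_of n A = 1\<^sub>m n" "inv_of n A * A = 1\<^sub>m n"
    unfolding inv_of_def by auto
  thus "inv_of n A \<in> carrier_mat n n" "A * inv_of n A = 1\<^sub>m n" "inv_of n A * A = 1\<^sub>m n" by auto
  define C where "C = inv_of n A"
  have C: "C \<in> carrier_mat n n" "A * C = 1\<^sub>m n" "C * A = 1\<^sub>m n" using B C_def by auto
  have "transpose_mat C * A = transpose_mat C * transpose_mat A" using A by simp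
  also have "\<dots> = transpose_mat (A * C)" using transpose_mult[OF A(1) C(1)] by simp
  also have "\<dots> = 1\<^sub>m n" using C by simp
  finally have CtA: "transpose_mat C * A = 1\<^sub>m n" .
  have "transpose_mat C = transpose_mat C * (A * C)" using C by simp
  also have "\<dots> = (transpose_mat C * A) * C" using assoc_mult_mat[of "transpose_mat C" n n A n C n] C A by simp
  also have "\<dots> = C" using CtA C by simp
  finally show "transpose_mat (inv_of n A) = inv_of n A" unfolding C_def .
qed

definition colmat :: "nat \<Rightarrow> nat \<Rightarrow> (nat \<Rightarrow> bit vec) \<Rightarrow> bit mat" where
  "colmat n r x = mat n r (\<lambda>(a,i). x i $ a)"

definition ones :: "nat \<Rightarrow> bit vec" where "ones r = vec r (\<lambda>_. 1)"

lemma colmat_carrier[simp]: "colmat n r x \<in> carrier_mat n r"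
  unfolding colmat_def by simp

lemma colmat_dims[simp]: "dim_row (colmat n r x) = n" "dim_col (colmat n r x) = r"
  unfolding colmat_def by simp_all

lemma col_colmat: "i < r \<Longrightarrow> x i \<in> carrier_vec n \<Longrightarrow> col (colmat n r x) i = x i"
  unfolding colmat_def by auto

lemma colmat_col: "Y \<in> carrier_mat n r \<Longrightarrow> colmat n r (\<lambda>i. col Y i) = Y"
  unfolding colmat_def by auto

lemma gram_colmat:
  assumes "\<forall>i<r. x i \<in> carrier_vec n" "B \<in> carrier_mat n n"
  shows "mat r r (\<lambda>(i,j). x i \<bullet> (B *\<^sub>v x j)) = transpose_mat (colmat n r x) * (B * colmat n r x)"
  using assms by (auto simp: col_colmat col_mult2[OF assms(2) colmat_carrier])

lemma gram_eq:
  assumes "\<forall>i<r. x i \<in> carrier_vec n" "A \<in> SGL n"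
  shows "gram n A r x = transpose_mat (colmat n r x) * (inv_of n A * colmat n r x)"
  unfolding gram_def using gram_colmat[OF assms(1) inv_of_props(1)[OF assms(2)]] .

lemma outer_sum_eq:
  assumes "\<forall>i<r. x i \<in> carrier_vec n"
  shows "outer_sum n r x = colmat n r x * transpose_mat (colmat n r x)"
  unfolding outer_sum_def colmat_def
  by (rule eq_matI) (auto simp: scalar_prod_def atLeast0LessThan mult.commute)

lemma vec_sum_eq:
  shows "vec_sum n r x = colmat n r x *\<^sub>v ones r"
  unfolding vec_sum_def colmat_def ones_def
  by (rule eq_vecI) (auto simp: scalar_prod_def atLeast0LessThan)

lemma dual_exists:
  assumes xi: "lin_indep_family n r x"
  shows "\<exists>L. L \<in> carrier_mat r n \<and> L * colmat n r x = 1\<^sub>m r"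
proof -
  interpret V: vec_space "TYPE(bit)" n .
  let ?Xs = "x ` {..<r}"
  have xc: "\<forall>i<r. x i \<in> carrier_vec n" and inj: "inj_on x {..<r}" and li: "V.lin_indpt ?Xs"
    using xi unfolding lin_indep_family_def by auto
  have Xsc: "?Xs \<subseteq> carrier_vec n" using xc by auto
  define P where "P = (\<lambda>T. T \<subseteq> carrier_vec n \<and> V.lin_indpt T \<and> ?Xs \<subseteq> T)"
  have bound: "finite A \<and> card A \<le> n" if "P A" for A
    using that V.li_le_dim[OF V.fin_dim, of A] V.dim_is_n unfolding P_def by auto
  obtain T where fT: "finite T" and mT: "maximal T P"
    using maximal_exists[of P n ?Xs] bound li Xsc unfolding P_def by blast
  have PT: "T \<subseteq> carrier_vec n" "V.lin_indpt T" "?Xs \<subseteq> T" using mT unfolding maximal_def P_def by auto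
  have "maximal T (\<lambda>S. S \<subseteq> carrier_vec n \<and> V.lin_indpt S)"
    using mT PT unfolding maximal_def P_def by blast
  hence "V.basis T" using V.max_li_is_basis by simp
  hence cT: "card T = n" using V.dim_basis[OF fT] V.dim_is_n by simp
  have cX: "card ?Xs = r" using card_image[OF inj] by simp
  obtain L0 where L0: "set L0 = T - ?Xs" "distinct L0"
    using finite_distinct_list[of "T - ?Xs"] fT by auto
  have lL0: "length L0 = n - r"
    using distinct_card[OF L0(2)] L0(1) card_Diff_subset[OF _ PT(3)] fT cT cX
    by (metis finite_imageI finite_lessThan)
  have rn: "r \<le> n" using card_mono[OF fT PT(3)] cX cT by simp
  define cs where "cs = map x [0..<r] @ L0"
  have dcs: "distinct cs" unfolding cs_def using L0 inj
    by (auto simp: distinct_map atLeast0LessThan)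
  have lcs: "length cs = n" unfolding cs_def using lL0 rn by simp
  have scs: "set cs = T" unfolding cs_def using L0 PT(3) by auto
  define S where "S = mat_of_cols n cs"
  have Sc: "S \<in> carrier_mat n n" unfolding S_def using lcs mat_of_cols_carrier(1)[of n cs] by simp
  have colsS: "cols S = cs" unfolding S_def using scs PT(1) by (simp add: cols_mat_of_cols)
  have "det S \<noteq> 0"
  proof
    assume "det S = 0"
    then obtain v where v: "v \<in> carrier_vec n" "v \<noteq> 0\<^sub>v n" "S *\<^sub>v v = 0\<^sub>v n"
      using det_0_iff_vec_prod_zero_field[OF Sc] by auto
    have "V.lin_dep (set (cols S))" using V.lin_depI[OF Sc v] dcs colsS by simp
    thus False using PT(2) colsS scs by simp
  qed
  from det_non_zero_imp_unit[OF Sc this, of undefined]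
  obtain D where D: "D \<in> carrier_mat n n" "D * S = 1\<^sub>m n"
    unfolding Units_def ring_mat_def by auto
  define L where "L = mat r n (\<lambda>(j,a). D $$ (j,a))"
  have "L * colmat n r x = 1\<^sub>m r"
  proof (rule eq_matI)
    fix j i assume ji: "j < dim_row (1\<^sub>m r :: bit mat)" "i < dim_col (1\<^sub>m r :: bit mat)"
    hence ji': "j < n" "i < n" "j < r" "i < r" using rn by auto
    have "row L j = row D j" unfolding L_def using ji' D(1) by (auto intro!: eq_vecI)
    moreover have "col (colmat n r x) i = col S i"
      using ji' col_colmat[of i r x n] xc unfolding S_def cs_def
      by (simp add: col_mat_of_cols nth_append lcs[unfolded cs_def])
    ultimately have "(L * colmat n r x) $$ (j,i) = (D * S) $$ (j,i)"
      using ji' D(1) Sc unfolding L_def by simp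
    thus "(L * colmat n r x) $$ (j,i) = 1\<^sub>m r $$ (j,i)" using D(2) ji' by simp
  qed (auto simp: L_def)
  moreover have "L \<in> carrier_mat r n" unfolding L_def by simp
  ultimately show ?thesis by blast
qed

lemma mult_mat_vec_zero[simp]:
  "(A :: 'a :: semiring_0 mat) \<in> carrier_mat n m \<Longrightarrow> A *\<^sub>v 0\<^sub>v m = 0\<^sub>v n"
  by (rule eq_vecI) (auto simp: scalar_prod_def)

lemma assoc4:
  fixes A :: "'a :: semiring_0 mat"
  assumes "A \<in> carrier_mat a b" "B \<in> carrier_mat b c" "C \<in> carrier_mat c d" "D \<in> carrier_mat d e"
  shows "A * (B * C) * D = (A * B) * (C * D)"
proof -
  have "A * (B * C) = (A * B) * C" using assoc_mult_mat[OF assms(1-3)] by simp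
  moreover have "(A * B) * C * D = (A * B) * (C * D)"
    using assoc_mult_mat[OF mult_carrier_mat[OF assms(1,2)] assms(3,4)] .
  ultimately show ?thesis by simp
qed

lemma assoc5:
  fixes A :: "'a :: semiring_0 mat"
  assumes "A \<in> carrier_mat a b" "B \<in> carrier_mat b c" "M \<in> carrier_mat c c" "C \<in> carrier_mat c d" "D \<in> carrier_mat d e"
  shows "A * (B * M * C) * D = (A * B) * M * (C * D)"
proof -
  have "A * (B * M * C) * D = (A * (B * M)) * (C * D)"
    using assoc4[OF assms(1) mult_carrier_mat[OF assms(2,3)] assms(4,5)] .
  moreover have "A * (B * M) = (A * B) * M" using assoc_mult_mat[OF assms(1-3)] by simp
  ultimately show ?thesis by simp
qed

lemma inj_mat_unit:
  fixes C :: "'a::field mat"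
  assumes C: "C \<in> carrier_mat r r" and inj: "\<And>v. v \<in> carrier_vec r \<Longrightarrow> C *\<^sub>v v = 0\<^sub>v r \<Longrightarrow> v = 0\<^sub>v r"
  shows "\<exists>D. D \<in> carrier_mat r r \<and> D * C = 1\<^sub>m r \<and> C * D = 1\<^sub>m r"
proof -
  have "det C \<noteq> 0" using det_0_iff_vec_prod_zero_field[OF C] inj by auto
  from det_non_zero_imp_unit[OF C this, of undefined]
  show ?thesis unfolding Units_def ring_mat_def by auto
qed

lemma orth_factor:
  fixes X Y L :: "bit mat"
  assumes X: "X \<in> carrier_mat n r" and Y: "Y \<in> carrier_mat n r" and L: "L \<in> carrier_mat r n"
    and LX: "L * X = 1\<^sub>m r" and XY: "X * transpose_mat X = Y * transpose_mat Y"
  shows "\<exists>P. P \<in> carrier_mat r r \<and> Y = X * P \<and> P * transpose_mat P = 1\<^sub>m r \<and> transpose_mat P * P = 1\<^sub>m r"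
proof -
  have Xt: "transpose_mat X \<in> carrier_mat r n" and Yt: "transpose_mat Y \<in> carrier_mat r n"
    and Lt: "transpose_mat L \<in> carrier_mat n r" using X Y L by auto
  have XtLt: "transpose_mat X * transpose_mat L = 1\<^sub>m r"
    using transpose_mult[OF L X] LX by simp
  define C where "C = transpose_mat Y * transpose_mat L"
  have C: "C \<in> carrier_mat r r" unfolding C_def using Yt Lt by simp
  have YC: "Y * C = X"
  proof -
    have "Y * C = (Y * transpose_mat Y) * transpose_mat L"
      unfolding C_def using assoc_mult_mat[OF Y Yt Lt] by simp
    also have "\<dots> = X * (transpose_mat X * transpose_mat L)"
      unfolding XY[symmetric] using assoc_mult_mat[OF X Xt Lt] by simp
    also have "\<dots> = X" using XtLt X by simp
    finally show ?thesis .
  qed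
  have "\<exists>D. D \<in> carrier_mat r r \<and> D * C = 1\<^sub>m r \<and> C * D = 1\<^sub>m r"
  proof (rule inj_mat_unit[OF C])
    fix v :: "bit vec" assume v: "v \<in> carrier_vec r" "C *\<^sub>v v = 0\<^sub>v r"
    have "X *\<^sub>v v = Y *\<^sub>v (C *\<^sub>v v)" using YC Y C v by (metis assoc_mult_mat_vec)
    also have "\<dots> = 0\<^sub>v n" using v Y by simp
    finally have "L *\<^sub>v (X *\<^sub>v v) = 0\<^sub>v r" using L by simp
    hence "(L * X) *\<^sub>v v = 0\<^sub>v r" using L X v by (metis assoc_mult_mat_vec)
    thus "v = 0\<^sub>v r" using LX v by simp
  qed
  then obtain D where D: "D \<in> carrier_mat r r" "D * C = 1\<^sub>m r" "C * D = 1\<^sub>m r" by auto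
  have YXD: "Y = X * D"
  proof -
    have "Y = Y * (C * D)" using D Y by simp
    also have "\<dots> = (Y * C) * D" using assoc_mult_mat[OF Y C D(1)] by simp
    finally show ?thesis using YC by simp
  qed
  have Dt: "transpose_mat D \<in> carrier_mat r r" using D by simp
  have "L * (X * transpose_mat X) * transpose_mat L = (L * X) * (transpose_mat X * transpose_mat L)"
    using assoc4[OF L X Xt Lt] .
  hence e1: "L * (X * transpose_mat X) * transpose_mat L = 1\<^sub>m r" using LX XtLt by simp
  have "Y * transpose_mat Y = X * (D * transpose_mat D) * transpose_mat X"
    unfolding YXD using transpose_mult[OF X D(1)] assoc4[OF X D(1) Dt Xt] by simp
  hence "L * (Y * transpose_mat Y) * transpose_mat L = (L * X) * (D * transpose_mat D) * (transpose_mat X * transpose_mat L)"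
    using assoc5[OF L X mult_carrier_mat[OF D(1) Dt] Xt Lt] by simp
  hence e2: "L * (Y * transpose_mat Y) * transpose_mat L = D * transpose_mat D"
    using LX XtLt D(1) Dt by simp
  have DDt: "D * transpose_mat D = 1\<^sub>m r" using e1 e2 XY by simp
  have "transpose_mat D * D = 1\<^sub>m r" using mat_mult_left_right_inverse[OF D(1) Dt DDt] .
  thus ?thesis using D(1) YXD DDt by blast
qed

definition outer :: "nat \<Rightarrow> bit vec \<Rightarrow> bit mat" where
  "outer r v = mat r r (\<lambda>(i,j). v $ i * v $ j)"

lemma outer_carrier[simp]: "outer r v \<in> carrier_mat r r" "dim_row (outer r v) = r" "dim_col (outer r v) = r"
  unfolding outer_def by auto

lemma lin_indpt_single:
  assumes v: "v \<in> carrier_vec r" "v \<noteq> 0\<^sub>v r"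
  shows "\<not> module.lin_dep (class_ring :: bit ring) (module_vec TYPE(bit) r) {v}"
proof
  interpret V: vec_space "TYPE(bit)" r .
  assume dep: "V.lin_dep {v}"
  define A1 where "A1 = mat_of_cols r [v]"
  have A1: "A1 \<in> carrier_mat r 1" unfolding A1_def using mat_of_cols_carrier(1)[of r "[v]"] by simp
  have cA: "cols A1 = [v]" unfolding A1_def using v by simp
  obtain w where w: "w \<in> carrier_vec 1" "w \<noteq> 0\<^sub>v 1" "A1 *\<^sub>v w = 0\<^sub>v r"
    using V.lin_depE[OF A1] dep cA by auto
  have w0: "w $ 0 = 1"
  proof (rule ccontr)
    assume "w $ 0 \<noteq> 1"
    hence "w = 0\<^sub>v 1" using w(1) by (auto intro!: eq_vecI simp: less_Suc_eq)
    thus False using w(2) by simp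
  qed
  have "v = 0\<^sub>v r"
  proof (rule eq_vecI)
    fix i assume i: "i < dim_vec (0\<^sub>v r :: bit vec)"
    have "(A1 *\<^sub>v w) $ i = v $ i"
      using i w(1) w0 unfolding A1_def by (simp add: scalar_prod_def mat_of_cols_def)
    thus "v $ i = 0\<^sub>v r $ i" using w(3) i by simp
  qed (use v in auto)
  thus False using v by simp
qed

lemma lin_indpt_pair:
  assumes c: "c1 \<in> carrier_vec r" "c2 \<in> carrier_vec r" "c1 \<noteq> 0\<^sub>v r" "c2 \<noteq> 0\<^sub>v r" "c1 \<noteq> c2"
  shows "\<not> module.lin_dep (class_ring :: bit ring) (module_vec TYPE(bit) r) {c1, c2}"
proof
  interpret V: vec_space "TYPE(bit)" r .
  assume dep: "V.lin_dep {c1, c2}"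
  define A2 where "A2 = mat_of_cols r [c1, c2]"
  have A2: "A2 \<in> carrier_mat r 2" unfolding A2_def using mat_of_cols_carrier(1)[of r "[c1,c2]"] by (simp add: numeral_2_eq_2)
  have cA: "cols A2 = [c1, c2]" unfolding A2_def using c by simp
  obtain w where w: "w \<in> carrier_vec 2" "w \<noteq> 0\<^sub>v 2" "A2 *\<^sub>v w = 0\<^sub>v r"
    using V.lin_depE[OF A2] dep cA c(5) by auto
  have ent: "c1 $ i * w $ 0 + c2 $ i * w $ 1 = 0" if i: "i < r" for i
  proof -
    have "(A2 *\<^sub>v w) $ i = c1 $ i * w $ 0 + c2 $ i * w $ 1"
      using i w(1) unfolding A2_def by (simp add: scalar_prod_def mat_of_cols_def numeral_2_eq_2)
    thus ?thesis using w(3) i by simp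
  qed
  have "w $ 0 \<noteq> 0 \<or> w $ 1 \<noteq> 0"
  proof (rule ccontr)
    assume "\<not> ?thesis"
    hence "w = 0\<^sub>v 2" using w(1) by (auto intro!: eq_vecI simp: less_Suc_eq numeral_2_eq_2)
    thus False using w(2) by simp
  qed
  hence "c1 = 0\<^sub>v r \<or> c2 = 0\<^sub>v r \<or> c1 = c2"
  proof (elim disjE)
    assume a: "w $ 0 \<noteq> 0"
    show ?thesis
    proof (cases "w $ 1 = 0")
      case True
      have "c1 = 0\<^sub>v r" using ent a True c(1) by (auto intro!: eq_vecI)
      thus ?thesis by simp
    next
      case False
      have "c1 = c2"
      proof (rule eq_vecI)
        fix i assume "i < dim_vec c2"
        hence "c1 $ i + c2 $ i = 0" using ent[of i] a False c(2) by simp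
        thus "c1 $ i = c2 $ i" by (cases "c1 $ i"; cases "c2 $ i") auto
      qed (use c in auto)
      thus ?thesis by simp
    qed
  next
    assume a: "w $ 1 \<noteq> 0"
    show ?thesis
    proof (cases "w $ 0 = 0")
      case True
      have "c2 = 0\<^sub>v r" using ent a True c(2) by (auto intro!: eq_vecI)
      thus ?thesis by simp
    next
      case False
      have "c1 = c2"
      proof (rule eq_vecI)
        fix i assume "i < dim_vec c2"
        hence "c1 $ i + c2 $ i = 0" using ent[of i] a False c(2) by simp
        thus "c1 $ i = c2 $ i" by (cases "c1 $ i"; cases "c2 $ i") auto
      qed (use c in auto)
      thus ?thesis by simp
    qed
  qed
  thus False using c by simp
qed



lemma nonzero_vec_ex:
  fixes v :: "bit vec"
  assumes "v \<in> carrier_vec r" "v \<noteq> 0\<^sub>v r"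
  shows "\<exists>j<r. v $ j = 1"
proof (rule ccontr)
  assume "\<not> ?thesis"
  hence "\<forall>j<r. v $ j = 0" by auto
  hence "v = 0\<^sub>v r" using assms(1) by (auto intro!: eq_vecI)
  thus False using assms(2) by simp
qed

lemma rank_outer:
  assumes v: "v \<in> carrier_vec r" "v \<noteq> 0\<^sub>v r"
  shows "mat_rank (outer r v) = 1"
proof -
  interpret V: vec_space "TYPE(bit)" r .
  have eq: "mat_rank (outer r v) = V.rank (outer r v)" unfolding mat_rank_def by simp
  have le: "V.rank (outer r v) \<le> 1"
    by (rule V.rank_le_1_product_entries[OF outer_carrier(1), where f = "\<lambda>i. v $ i" and g = "\<lambda>j. v $ j"])
      (simp add: outer_def)
  obtain j where j: "j < r" "v $ j = 1" using nonzero_vec_ex[OF v] by auto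
  have "col (outer r v) j = v" using j v unfolding outer_def by (auto intro!: eq_vecI)
  hence "{v} \<subseteq> set (cols (outer r v))" using j by (auto simp: cols_def intro!: image_eqI[where x=j])
  have "card {v} \<le> V.rank (outer r v)"
    by (rule V.rank_ge_card_indpt[OF outer_carrier(1) \<open>{v} \<subseteq> set (cols (outer r v))\<close> lin_indpt_single[OF v]])
  hence "V.rank (outer r v) \<ge> 1" by simp
  with le eq show ?thesis by simp
qed


lemma rank1_outer:
  assumes G: "G \<in> carrier_mat r r" and sym: "\<And>i j. i < r \<Longrightarrow> j < r \<Longrightarrow> G $$ (i,j) = G $$ (j,i)"
    and rk: "mat_rank G = 1"
  shows "\<exists>v. v \<in> carrier_vec r \<and> v \<noteq> 0\<^sub>v r \<and> G = outer r v"
proof -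
  interpret V: vec_space "TYPE(bit)" r .
  have rk': "V.rank G = 1" using rk G unfolding mat_rank_def by simp
  have colc: "col G j \<in> carrier_vec r" for j using G by (simp add: col_def)
  have colI: "col G j $ i = G $$ (i,j)" if "i < r" "j < r" for i j using that G by simp
  have same: "col G j1 = col G j2" if j: "j1 < r" "j2 < r" "col G j1 \<noteq> 0\<^sub>v r" "col G j2 \<noteq> 0\<^sub>v r" for j1 j2
  proof (rule ccontr)
    assume ne: "col G j1 \<noteq> col G j2"
    have sub: "{col G j1, col G j2} \<subseteq> set (cols G)" using j G by (auto simp: cols_def)
    from V.rank_ge_card_indpt[OF G sub] lin_indpt_pair[OF colc colc j(3,4) ne]
    have "V.rank G \<ge> card {col G j1, col G j2}" by simp
    with ne rk' show False by simp
  qed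
  have "\<exists>i0<r. \<exists>j0<r. G $$ (i0,j0) = 1"
  proof (rule ccontr)
    assume "\<not> ?thesis"
    hence "\<forall>i<r. \<forall>j<r. G $$ (i,j) = 0" by (metis bit_not_one_iff)
    hence "G = 0\<^sub>m r r" using G by (auto intro!: eq_matI)
    hence "V.rank G = 0" using V.rank_0I[of r] by simp
    thus False using rk' by simp
  qed
  then obtain i0 j0 where ij0: "i0 < r" "j0 < r" "G $$ (i0,j0) = 1" by auto
  define c where "c = col G j0"
  have c: "c \<in> carrier_vec r" unfolding c_def using colc .
  have "c $ i0 = 1" unfolding c_def using colI ij0 by simp
  hence cnz: "c \<noteq> 0\<^sub>v r" using ij0 by auto
  have coli0: "col G i0 = c"
  proof -
    have "col G i0 $ j0 = 1" using ij0 sym[of j0 i0] colI by simp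
    hence "col G i0 \<noteq> 0\<^sub>v r" using ij0 by auto
    thus ?thesis using same[of i0 j0] ij0 cnz unfolding c_def by simp
  qed
  have cj0: "c $ j0 = 1"
  proof -
    have "c $ j0 = col G i0 $ j0" using coli0 by simp
    also have "\<dots> = G $$ (j0, i0)" using colI ij0 by simp
    also have "\<dots> = G $$ (i0, j0)" using sym ij0 by simp
    finally show ?thesis using ij0 by simp
  qed
  have "G = outer r c"
  proof (rule eq_matI)
    fix i j assume ij: "i < dim_row (outer r c)" "j < dim_col (outer r c)"
    hence ij': "i < r" "j < r" by auto
    show "G $$ (i,j) = outer r c $$ (i,j)"
    proof (cases "col G j = 0\<^sub>v r")
      case True
      have "G $$ (i,j) = 0" using arg_cong[OF True, of "\<lambda>w. w $ i"] colI ij' by simp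
      moreover have "c $ j = 0"
      proof -
        have "c $ j = G $$ (j, j0)" unfolding c_def using colI ij' ij0 by simp
        also have "\<dots> = G $$ (j0, j)" using sym ij' ij0 by simp
        also have "\<dots> = 0" using arg_cong[OF True, of "\<lambda>w. w $ j0"] colI ij' ij0 by simp
        finally show ?thesis .
      qed
      ultimately show ?thesis using ij' unfolding outer_def by simp
    next
      case False
      hence cj: "col G j = c" using same[of j j0] ij' ij0 cnz unfolding c_def by simp
      have "G $$ (i,j) = c $ i" using arg_cong[OF cj, of "\<lambda>w. w $ i"] colI ij' by simp
      moreover have "c $ j = 1"
      proof -
        have "c $ j = G $$ (j, j0)" unfolding c_def using colI ij' ij0 by simp
        also have "\<dots> = G $$ (j0, j)" using sym ij' ij0 by simp
        also have "\<dots> = c $ j0" using arg_cong[OF cj, of "\<lambda>w. w $ j0"] colI ij' ij0 by simp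
        finally show ?thesis using cj0 by simp
      qed
      ultimately show ?thesis using ij' unfolding outer_def by simp
    qed
  qed (use G in auto)
  thus ?thesis using c cnz by blast
qed




lemma outer_conj:
  fixes P :: "bit mat"
  assumes P: "P \<in> carrier_mat r r" and v: "v \<in> carrier_vec r"
  shows "transpose_mat P * outer r v * P = outer r (transpose_mat P *\<^sub>v v)"
proof (rule eq_matI)
  fix i j assume ij: "i < dim_row (outer r (transpose_mat P *\<^sub>v v))" "j < dim_col (outer r (transpose_mat P *\<^sub>v v))"
  hence ij': "i < r" "j < r" using P by auto
  define c where "c = (\<lambda>i. \<Sum>a<r. P $$ (a,i) * v $ a)"
  have 1: "(transpose_mat P * outer r v) $$ (i,b) = c i * v $ b" if b: "b < r" for b
  proof -
    have "(transpose_mat P * outer r v) $$ (i,b) = (\<Sum>a<r. P $$ (a,i) * (v $ a * v $ b))"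
      using P ij' b by (simp add: scalar_prod_def outer_def atLeast0LessThan)
    also have "\<dots> = c i * v $ b" unfolding c_def by (simp add: sum_distrib_right mult.assoc)
    finally show ?thesis .
  qed
  have "(transpose_mat P * outer r v * P) $$ (i,j) = (\<Sum>b<r. (c i * v $ b) * P $$ (b,j))"
    using P ij' 1 by (simp add: scalar_prod_def atLeast0LessThan)
  also have "\<dots> = c i * (\<Sum>b<r. P $$ (b,j) * v $ b)" by (simp add: sum_distrib_left mult_ac)
  also have "\<dots> = c i * c j" unfolding c_def by (simp add: mult.commute)
  also have "\<dots> = outer r (transpose_mat P *\<^sub>v v) $$ (i,j)"
    using P v ij' unfolding outer_def c_def by (simp add: scalar_prod_def atLeast0LessThan mult.commute)
  finally show "(transpose_mat P * outer r v * P) $$ (i,j) = outer r (transpose_mat P *\<^sub>v v) $$ (i,j)" .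
qed (use P in auto)

lemma ones_fix:
  fixes P :: "bit mat"
  assumes P: "P \<in> carrier_mat r r" and PP: "P * transpose_mat P = 1\<^sub>m r"
  shows "P *\<^sub>v ones r = ones r"
proof (rule eq_vecI)
  fix i assume "i < dim_vec (ones r)"
  hence i: "i < r" by (simp add: ones_def)
  have "(P *\<^sub>v ones r) $ i = (\<Sum>j<r. P $$ (i,j) * P $$ (i,j))"
    using P i by (simp add: ones_def scalar_prod_def atLeast0LessThan)
  also have "\<dots> = (P * transpose_mat P) $$ (i,i)"
    using P i by (simp add: scalar_prod_def atLeast0LessThan)
  also have "\<dots> = 1" using PP i by simp
  finally show "(P *\<^sub>v ones r) $ i = ones r $ i" using i by (simp add: ones_def)
qed (use P in \<open>auto simp: ones_def\<close>)

lemma sum_conj: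
  fixes P :: "bit mat"
  assumes P: "P \<in> carrier_mat r r" and PP: "P * transpose_mat P = 1\<^sub>m r" and v: "v \<in> carrier_vec r"
  shows "(\<Sum>i<r. (transpose_mat P *\<^sub>v v) $ i) = (\<Sum>i<r. v $ i)"
proof -
  have "(\<Sum>i<r. (transpose_mat P *\<^sub>v v) $ i) = (\<Sum>i<r. \<Sum>a<r. P $$ (a,i) * v $ a)"
    using P v by (simp add: scalar_prod_def atLeast0LessThan)
  also have "\<dots> = (\<Sum>a<r. \<Sum>i<r. P $$ (a,i) * v $ a)" by (rule sum.swap)
  also have "\<dots> = (\<Sum>a<r. (P *\<^sub>v ones r) $ a * v $ a)"
    using P by (simp add: ones_def scalar_prod_def atLeast0LessThan sum_distrib_right)
  also have "\<dots> = (\<Sum>a<r. v $ a)" using ones_fix[OF P PP] by (simp add: ones_def)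
  finally show ?thesis .
qed

lemma trace_outer: "mat_trace (outer r h) = (\<Sum>i<r. h $ i)"
  unfolding mat_trace_def outer_def by simp

lemma gram_sym:
  fixes X B :: "bit mat"
  assumes X: "X \<in> carrier_mat n r" and B: "B \<in> carrier_mat n n" and Bs: "transpose_mat B = B"
    and ij: "i < r" "j < r"
  shows "(transpose_mat X * (B * X)) $$ (i,j) = (transpose_mat X * (B * X)) $$ (j,i)"
proof -
  have "transpose_mat (transpose_mat X * (B * X)) = transpose_mat (B * X) * X"
    using transpose_mult[of "transpose_mat X" r n "B * X" r] X B by simp
  also have "\<dots> = (transpose_mat X * B) * X" using transpose_mult[OF B X] Bs by simp
  also have "\<dots> = transpose_mat X * (B * X)" using assoc_mult_mat[of "transpose_mat X" r n B n X r] X B by simp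
  finally have e: "transpose_mat (transpose_mat X * (B * X)) = transpose_mat X * (B * X)" .
  have "(transpose_mat X * (B * X)) $$ (i,j) = transpose_mat (transpose_mat X * (B * X)) $$ (i,j)"
    by (subst e) simp
  also have "\<dots> = (transpose_mat X * (B * X)) $$ (j,i)" using ij X by simp
  finally show ?thesis .
qed

definition wt :: "nat \<Rightarrow> bit vec \<Rightarrow> nat" where
  "wt r v = card {i \<in> {..<r}. v $ i = 1}"

lemma of_nat_bit: "(of_nat m :: bit) = (if even m then 0 else 1)"
  by (induction m) auto

lemma sum_wt: "(\<Sum>i<r. v $ i) = (of_nat (wt r v) :: bit)"
proof -
  have "(\<Sum>i<r. v $ i) = (\<Sum>i<r. if v $ i = 1 then 1 else 0 :: bit)"
    by (rule sum.cong) (auto split: bit.splits)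
  also have "\<dots> = (\<Sum>i\<in>{i \<in> {..<r}. v $ i = 1}. 1)" using sum.inter_filter[of "{..<r}" "\<lambda>_. 1::bit" "\<lambda>i. v $ i = 1"] by simp
  also have "\<dots> = of_nat (wt r v)" unfolding wt_def by simp
  finally show ?thesis .
qed




definition indv :: "nat \<Rightarrow> nat set \<Rightarrow> bit vec" where
  "indv r F = vec r (\<lambda>i. if i \<in> F then 1 else 0)"

definition move :: "nat \<Rightarrow> nat set \<Rightarrow> bit mat" where
  "move r F = 1\<^sub>m r + outer r (indv r F)"

definition orth :: "nat \<Rightarrow> bit mat \<Rightarrow> bool" where
  "orth r R \<longleftrightarrow> R \<in> carrier_mat r r \<and> R * transpose_mat R = 1\<^sub>m r \<and> transpose_mat R * R = 1\<^sub>m r"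

lemma orth_one: "orth r (1\<^sub>m r)" unfolding orth_def by simp

lemma orth_mult:
  assumes "orth r R1" "orth r R2"
  shows "orth r (R1 * R2)"
proof -
  have c: "R1 \<in> carrier_mat r r" "R2 \<in> carrier_mat r r" and o: "R1 * transpose_mat R1 = 1\<^sub>m r"
    "transpose_mat R1 * R1 = 1\<^sub>m r" "R2 * transpose_mat R2 = 1\<^sub>m r" "transpose_mat R2 * R2 = 1\<^sub>m r"
    using assms unfolding orth_def by auto
  have ct: "transpose_mat R1 \<in> carrier_mat r r" "transpose_mat R2 \<in> carrier_mat r r" using c by auto
  have t: "transpose_mat (R1 * R2) = transpose_mat R2 * transpose_mat R1" using transpose_mult[OF c] .
  have "R1 * R2 * transpose_mat (R1 * R2) = R1 * (R2 * transpose_mat R2) * transpose_mat R1"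
    unfolding t using assoc4[OF c(1) c(2) ct(2) ct(1)] by simp
  also have "\<dots> = 1\<^sub>m r" using o c by simp
  finally have 1: "R1 * R2 * transpose_mat (R1 * R2) = 1\<^sub>m r" .
  have "transpose_mat (R1 * R2) * (R1 * R2) = transpose_mat R2 * (transpose_mat R1 * R1) * R2"
    unfolding t using assoc4[OF ct(2) ct(1) c(1) c(2)] by simp
  also have "\<dots> = 1\<^sub>m r" using o c by simp
  finally have 2: "transpose_mat (R1 * R2) * (R1 * R2) = 1\<^sub>m r" .
  show ?thesis using 1 2 c unfolding orth_def by auto
qed

lemma indv_carrier[simp]: "indv r F \<in> carrier_vec r" unfolding indv_def by simp

lemma sum_indv: "F \<subseteq> {..<r} \<Longrightarrow> (\<Sum>l<r. indv r F $ l * f l) = (\<Sum>l\<in>F. f l)"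
proof -
  assume F: "F \<subseteq> {..<r}"
  have "(\<Sum>l<r. indv r F $ l * f l) = (\<Sum>l<r. if l \<in> F then f l else 0)"
    by (rule sum.cong) (auto simp: indv_def)
  also have "\<dots> = (\<Sum>l\<in>{l \<in> {..<r}. l \<in> F}. f l)"
    using sum.inter_filter[of "{..<r}" f "\<lambda>l. l \<in> F"] by simp
  also have "{l \<in> {..<r}. l \<in> F} = F" using F by auto
  finally show ?thesis .
qed

lemma outer_sq_zero:
  assumes w: "w \<in> carrier_vec r" and s: "(\<Sum>l<r. w $ l) = 0"
  shows "outer r w * outer r w = 0\<^sub>m r r"
proof (rule eq_matI)
  fix i j assume ij: "i < dim_row (0\<^sub>m r r :: bit mat)" "j < dim_col (0\<^sub>m r r :: bit mat)"
  hence ij': "i < r" "j < r" by auto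
  have "(outer r w * outer r w) $$ (i,j) = (\<Sum>l<r. (w $ i * w $ l) * (w $ l * w $ j))"
    using ij' by (simp add: outer_def scalar_prod_def atLeast0LessThan)
  also have "\<dots> = (\<Sum>l<r. (w $ i * w $ j) * w $ l)"
    by (rule sum.cong) (auto simp: mult_ac)
  also have "\<dots> = 0" using s by (simp add: sum_distrib_left[symmetric])
  finally show "(outer r w * outer r w) $$ (i,j) = 0\<^sub>m r r $$ (i,j)" using ij' by simp
qed auto

lemma move_orth:
  assumes F: "F \<subseteq> {..<r}" and ev: "even (card F)"
  shows "orth r (move r F)"
proof -
  define w where "w = indv r F"
  define E where "E = outer r w"
  have w: "w \<in> carrier_vec r" unfolding w_def by simp
  have E: "E \<in> carrier_mat r r" unfolding E_def by simp
  have "(\<Sum>l<r. w $ l) = (\<Sum>l<r. indv r F $ l * 1)" unfolding w_def by simp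
  also have "\<dots> = of_nat (card F)" using sum_indv[OF F, of "\<lambda>_. 1"] by simp
  also have "\<dots> = 0" using ev by (simp add: of_nat_bit)
  finally have EE: "E * E = 0\<^sub>m r r" unfolding E_def using outer_sq_zero[OF w] by simp
  have Mt: "transpose_mat (move r F) = move r F"
    unfolding move_def by (rule eq_matI) (auto simp: outer_def mult.commute)
  have "move r F * move r F = (1\<^sub>m r + E) * (1\<^sub>m r + E)" unfolding move_def E_def w_def by simp
  also have "\<dots> = 1\<^sub>m r * (1\<^sub>m r + E) + E * (1\<^sub>m r + E)"
    by (rule add_mult_distrib_mat[OF one_carrier_mat E add_carrier_mat[OF E, of "1\<^sub>m r"]])
  also have "E * (1\<^sub>m r + E) = E * 1\<^sub>m r + E * E"
    by (rule mult_add_distrib_mat[OF E one_carrier_mat E])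
  also have "1\<^sub>m r * (1\<^sub>m r + E) + (E * 1\<^sub>m r + E * E) = 1\<^sub>m r"
    using E unfolding EE by (intro eq_matI) auto
  finally have MM: "move r F * move r F = 1\<^sub>m r" .
  show ?thesis unfolding orth_def using Mt MM by (simp add: move_def)
qed

lemma move_apply:
  assumes F: "F \<subseteq> {..<r}" and v: "v \<in> carrier_vec r"
  shows "move r F *\<^sub>v v = vec r (\<lambda>i. v $ i + (if i \<in> F then (\<Sum>l\<in>F. v $ l) else 0))"
proof (rule eq_vecI)
  fix i assume "i < dim_vec (vec r (\<lambda>i. v $ i + (if i \<in> F then (\<Sum>l\<in>F. v $ l) else 0)))"
  hence i: "i < r" by simp
  have "move r F *\<^sub>v v = 1\<^sub>m r *\<^sub>v v + outer r (indv r F) *\<^sub>v v"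
    unfolding move_def by (rule add_mult_distrib_mat_vec[OF one_carrier_mat outer_carrier(1) v])
  hence "(move r F *\<^sub>v v) $ i = v $ i + (outer r (indv r F) *\<^sub>v v) $ i" using i v by simp
  also have "(outer r (indv r F) *\<^sub>v v) $ i = (\<Sum>l<r. indv r F $ i * (indv r F $ l * v $ l))"
    using i v by (simp add: outer_def scalar_prod_def atLeast0LessThan mult.assoc)
  also have "\<dots> = indv r F $ i * (\<Sum>l\<in>F. v $ l)"
    using sum_indv[OF F, of "\<lambda>l. v $ l"] by (simp add: sum_distrib_left[symmetric])
  also have "\<dots> = (if i \<in> F then (\<Sum>l\<in>F. v $ l) else 0)" using i by (simp add: indv_def)
  finally show "(move r F *\<^sub>v v) $ i = vec r (\<lambda>i. v $ i + (if i \<in> F then (\<Sum>l\<in>F. v $ l) else 0)) $ i"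
    using i by simp
qed (simp add: move_def)




lemma bit_plus_one[simp]: "(a::bit) + 1 = 1 \<longleftrightarrow> a = 0" "(a::bit) + 1 = 0 \<longleftrightarrow> a = 1"
  by (cases a; simp)+

lemma move_val:
  assumes F: "F \<subseteq> {..<r}" and v: "v \<in> carrier_vec r" and s: "(\<Sum>l\<in>F. v $ l) = 1" and i: "i < r"
  shows "(move r F *\<^sub>v v) $ i = v $ i + (if i \<in> F then 1 else 0)"
  using move_apply[OF F v] s i by simp

lemma wt_le: "wt r v \<le> r"
  unfolding wt_def using card_mono[of "{..<r}" "{i \<in> {..<r}. v $ i = 1}"] by auto

lemma zeros_card: "card {i \<in> {..<r}. v $ i = 0} = r - wt r v"
proof -
  let ?A = "{i \<in> {..<r}. v $ i = 1}" and ?B = "{i \<in> {..<r}. v $ i = 0}"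
  have u: "{..<r} = ?A \<union> ?B" by (auto split: bit.splits)
  have d: "?A \<inter> ?B = {}" by auto
  have "card (?A \<union> ?B) = card ?A + card ?B" by (rule card_Un_disjoint) (use d in auto)
  moreover have "r = card (?A \<union> ?B)" using arg_cong[OF u, of card] by simp
  ultimately have "r = wt r v + card ?B" unfolding wt_def by linarith
  thus ?thesis by simp
qed

lemma step_down:
  assumes v: "v \<in> carrier_vec r" and abcd: "a < r" "b < r" "c < r" "d < r"
    "a \<noteq> b" "a \<noteq> c" "a \<noteq> d" "b \<noteq> c" "b \<noteq> d" "c \<noteq> d"
    and vv: "v $ a = 1" "v $ b = 1" "v $ c = 1" "v $ d = 0"
  shows "\<exists>R. orth r R \<and> wt r (R *\<^sub>v v) + 2 = wt r v"
proof -
  define F where "F = {a,b,c,d}"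
  have F: "F \<subseteq> {..<r}" unfolding F_def using abcd by auto
  have cF: "card F = 4" unfolding F_def using abcd by simp
  have s: "(\<Sum>l\<in>F. v $ l) = 1" unfolding F_def using abcd vv by simp
  define S where "S = {i \<in> {..<r}. v $ i = 1}"
  have "{i \<in> {..<r}. (move r F *\<^sub>v v) $ i = 1} = insert d (S - {a,b,c})"
  proof (rule Set.set_eqI)
    fix i
    show "i \<in> {i \<in> {..<r}. (move r F *\<^sub>v v) $ i = 1} \<longleftrightarrow> i \<in> insert d (S - {a,b,c})"
    proof (cases "i < r")
      case True
      note e = move_val[OF F v s True]
      show ?thesis
      proof (cases "i \<in> F")
        case True
        then show ?thesis using e vv \<open>i < r\<close> abcd unfolding F_def S_def by auto
      next
        case False
        then show ?thesis using e \<open>i < r\<close> unfolding F_def S_def by auto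
      qed
    next
      case False
      then show ?thesis using abcd unfolding S_def by auto
    qed
  qed
  moreover have "d \<notin> S - {a,b,c}" using vv unfolding S_def by auto
  moreover have "card (S - {a,b,c}) = card S - 3"
  proof -
    have "{a,b,c} \<subseteq> S" using abcd vv unfolding S_def by auto
    hence "card (S - {a,b,c}) = card S - card {a,b,c}" by (intro card_Diff_subset) auto
    thus ?thesis using abcd by simp
  qed
  moreover have "card S \<ge> 3"
  proof -
    have "{a,b,c} \<subseteq> S" using abcd vv unfolding S_def by auto
    hence "card {a,b,c} \<le> card S" by (intro card_mono) (auto simp: S_def)
    thus ?thesis using abcd by simp
  qed
  ultimately have "wt r (move r F *\<^sub>v v) + 2 = wt r v"
    unfolding wt_def S_def[symmetric] by (simp add: S_def)
  moreover have "orth r (move r F)" using move_orth[OF F] cF by simp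
  ultimately show ?thesis by blast
qed

lemma step_up:
  assumes v: "v \<in> carrier_vec r" and abcd: "a < r" "b < r" "c < r" "d < r"
    "a \<noteq> b" "a \<noteq> c" "a \<noteq> d" "b \<noteq> c" "b \<noteq> d" "c \<noteq> d"
    and vv: "v $ a = 1" "v $ b = 0" "v $ c = 0" "v $ d = 0"
  shows "\<exists>R. orth r R \<and> wt r (R *\<^sub>v v) = wt r v + 2"
proof -
  define F where "F = {a,b,c,d}"
  have F: "F \<subseteq> {..<r}" unfolding F_def using abcd by auto
  have cF: "card F = 4" unfolding F_def using abcd by simp
  have s: "(\<Sum>l\<in>F. v $ l) = 1" unfolding F_def using abcd vv by simp
  define S where "S = {i \<in> {..<r}. v $ i = 1}"
  have "{i \<in> {..<r}. (move r F *\<^sub>v v) $ i = 1} = insert b (insert c (insert d (S - {a})))"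
  proof (rule Set.set_eqI)
    fix i
    show "i \<in> {i \<in> {..<r}. (move r F *\<^sub>v v) $ i = 1} \<longleftrightarrow> i \<in> insert b (insert c (insert d (S - {a})))"
    proof (cases "i < r")
      case True
      note e = move_val[OF F v s True]
      show ?thesis
      proof (cases "i \<in> F")
        case True
        then show ?thesis using e vv \<open>i < r\<close> abcd unfolding F_def S_def by auto
      next
        case False
        then show ?thesis using e \<open>i < r\<close> unfolding F_def S_def by auto
      qed
    next
      case False
      then show ?thesis using abcd unfolding S_def by auto
    qed
  qed
  moreover have "b \<notin> insert c (insert d (S - {a}))" "c \<notin> insert d (S - {a})" "d \<notin> S - {a}"
    using vv abcd unfolding S_def by auto
  moreover have "card (S - {a}) = card S - 1"
  proof -
    have "{a} \<subseteq> S" using abcd vv unfolding S_def by auto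
    hence "card (S - {a}) = card S - card {a}" by (intro card_Diff_subset) auto
    thus ?thesis by simp
  qed
  moreover have "card S \<ge> 1"
  proof -
    have "{a} \<subseteq> S" using abcd vv unfolding S_def by auto
    hence "card {a} \<le> card S" by (intro card_mono) (auto simp: S_def)
    thus ?thesis by simp
  qed
  ultimately have "wt r (move r F *\<^sub>v v) = wt r v + 2"
    unfolding wt_def S_def[symmetric] by (simp add: S_def)
  moreover have "orth r (move r F)" using move_orth[OF F] cF by simp
  ultimately show ?thesis by blast
qed




lemma obtain3:
  assumes "finite S" "card S \<ge> 3"
  shows "\<exists>a b c. a \<in> S \<and> b \<in> S \<and> c \<in> S \<and> a \<noteq> b \<and> a \<noteq> c \<and> b \<noteq> c"
proof -
  obtain T where T: "T \<subseteq> S" "card T = 3" using obtain_subset_with_card_n[OF assms(2)] by metis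
  then obtain a b c where "T = {a,b,c}" "a \<noteq> b" "b \<noteq> c" "a \<noteq> c" using card_3_iff by metis
  thus ?thesis using T by blast
qed

lemma reach_k:
  assumes k: "even k" "2 \<le> k" "k < r"
  shows "v \<in> carrier_vec r \<Longrightarrow> even (wt r v) \<Longrightarrow> 2 \<le> wt r v \<Longrightarrow> wt r v < r \<Longrightarrow>
    \<exists>R. orth r R \<and> wt r (R *\<^sub>v v) = k"
proof (induction "if wt r v \<le> k then k - wt r v else wt r v - k" arbitrary: v rule: less_induct)
  case less
  define S where "S = {i \<in> {..<r}. v $ i = 1}"
  define Z where "Z = {i \<in> {..<r}. v $ i = 0}"
  have cS: "card S = wt r v" unfolding S_def wt_def ..
  have cZ: "card Z = r - wt r v" unfolding Z_def using zeros_card .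
  have fS: "finite S" "finite Z" unfolding S_def Z_def by auto
  consider "wt r v = k" | "wt r v > k" | "wt r v < k" by linarith
  then show ?case
  proof cases
    case 1
    have "1\<^sub>m r *\<^sub>v v = v" using less.prems(1) by simp
    thus ?thesis using orth_one 1 by metis
  next
    case 2
    have ge: "wt r v \<ge> k + 2" using 2 k(1) less.prems(2) by presburger
    obtain a b c where abc: "a \<in> S" "b \<in> S" "c \<in> S" "a \<noteq> b" "a \<noteq> c" "b \<noteq> c"
      using obtain3[OF fS(1)] cS ge k(2) by auto
    obtain d where d: "d \<in> Z" using cZ less.prems(4) fS(2) by (metis card.empty diff_is_0_eq ex_in_conv not_le)
    have dd: "d \<noteq> a" "d \<noteq> b" "d \<noteq> c" using abc d unfolding S_def Z_def by auto
    obtain M where M: "orth r M" "wt r (M *\<^sub>v v) + 2 = wt r v"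
      using step_down[OF less.prems(1), of a b c d] abc d dd unfolding S_def Z_def by auto
    have Mc: "M \<in> carrier_mat r r" using M(1) unfolding orth_def by auto
    have u: "M *\<^sub>v v \<in> carrier_vec r" using Mc less.prems(1) by simp
    have ev: "even (wt r (M *\<^sub>v v))" using M(2) less.prems(2) by presburger
    have "\<exists>R. orth r R \<and> wt r (R *\<^sub>v (M *\<^sub>v v)) = k"
      by (rule less.hyps[OF _ u]) (use M(2) ge 2 less.prems k ev in auto)
    then obtain R where R: "orth r R" "wt r (R *\<^sub>v (M *\<^sub>v v)) = k" by auto
    have Rc: "R \<in> carrier_mat r r" using R(1) unfolding orth_def by auto
    have "(R * M) *\<^sub>v v = R *\<^sub>v (M *\<^sub>v v)" using Rc Mc less.prems(1) by simp
    thus ?thesis using R orth_mult[OF R(1) M(1)] by metis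
  next
    case 3
    have le: "wt r v + 2 \<le> k" using 3 k(1) less.prems(2) by presburger
    obtain b c d where bcd: "b \<in> Z" "c \<in> Z" "d \<in> Z" "b \<noteq> c" "b \<noteq> d" "c \<noteq> d"
    proof -
      have "card Z \<ge> 3" using cZ le k(3) by linarith
      thus ?thesis using obtain3[OF fS(2)] that by blast
    qed
    obtain a where a: "a \<in> S" using cS less.prems(3) fS(1) by (metis card.empty ex_in_conv not_numeral_le_zero)
    have aa: "a \<noteq> b" "a \<noteq> c" "a \<noteq> d" using a bcd unfolding S_def Z_def by auto
    obtain M where M: "orth r M" "wt r (M *\<^sub>v v) = wt r v + 2"
      using step_up[OF less.prems(1), of a b c d] bcd a aa unfolding S_def Z_def by auto
    have Mc: "M \<in> carrier_mat r r" using M(1) unfolding orth_def by auto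
    have u: "M *\<^sub>v v \<in> carrier_vec r" using Mc less.prems(1) by simp
    have ev: "even (wt r (M *\<^sub>v v))" using M(2) less.prems(2) by presburger
    have "\<exists>R. orth r R \<and> wt r (R *\<^sub>v (M *\<^sub>v v)) = k"
      by (rule less.hyps[OF _ u]) (use M(2) le 3 less.prems k ev in auto)
    then obtain R where R: "orth r R" "wt r (R *\<^sub>v (M *\<^sub>v v)) = k" by auto
    have Rc: "R \<in> carrier_mat r r" using R(1) unfolding orth_def by auto
    have "(R * M) *\<^sub>v v = R *\<^sub>v (M *\<^sub>v v)" using Rc Mc less.prems(1) by simp
    thus ?thesis using R orth_mult[OF R(1) M(1)] by metis
  qed
qed




lemma perm_exists:
  assumes S: "S \<subseteq> {..<r}" "card S = k" and kr: "k \<le> r"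
  shows "\<exists>p. p permutes {..<r} \<and> p ` {..<k} = S"
proof -
  have fS: "finite S" using S(1) finite_subset by blast
  obtain f where f: "bij_betw f {..<k} S" using finite_same_card_bij[of "{..<k}" S] fS S(2) by auto
  have c2: "card ({..<r} - {..<k}) = card ({..<r} - S)"
    using S kr fS by (simp add: card_Diff_subset)
  obtain g where g: "bij_betw g ({..<r} - {..<k}) ({..<r} - S)"
    using finite_same_card_bij[of "{..<r} - {..<k}" "{..<r} - S"] c2 by auto
  define p where "p = (\<lambda>i. if i < k then f i else if i < r then g i else i)"
  have f': "bij_betw p {..<k} S" using f by (rule bij_betw_cong[THEN iffD1, rotated]) (simp add: p_def)
  have g': "bij_betw p ({..<r} - {..<k}) ({..<r} - S)"
    using g by (rule bij_betw_cong[THEN iffD1, rotated]) (simp add: p_def)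
  have "bij_betw p ({..<k} \<union> ({..<r} - {..<k})) (S \<union> ({..<r} - S))"
    by (rule bij_betw_combine[OF f' g']) auto
  moreover have "{..<k} \<union> ({..<r} - {..<k}) = {..<r}" using kr by auto
  moreover have "S \<union> ({..<r} - S) = {..<r}" using S by auto
  ultimately have "bij_betw p {..<r} {..<r}" by simp
  hence "p permutes {..<r}" by (rule bij_imp_permutes) (use kr in \<open>auto simp: p_def\<close>)
  moreover have "p ` {..<k} = S" using f' by (simp add: bij_betw_def)
  ultimately show ?thesis by blast
qed

lemma perm_mat_vec:
  assumes p: "p permutes {..<r}" and t: "t \<in> carrier_vec r" and i: "i < r"
  shows "(mat r r (\<lambda>(i,j). if i = p j then 1 else 0) *\<^sub>v t) $ i = (t $ (inv_into UNIV p i) :: bit)"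
proof -
  have ip: "inv_into UNIV p i < r" using permutes_in_image[OF permutes_inv[OF p]] i by simp
  have eq: "(i = p j) \<longleftrightarrow> (j = inv_into UNIV p i)" if "j < r" for j
    using permutes_inverses[OF p] by metis
  have "(mat r r (\<lambda>(i,j). if i = p j then 1 else 0) *\<^sub>v t) $ i
      = (\<Sum>j<r. (if i = p j then 1 else 0) * t $ j)"
    using i t by (simp add: scalar_prod_def atLeast0LessThan)
  also have "\<dots> = (\<Sum>j<r. if j = inv_into UNIV p i then t $ j else 0)"
    by (rule sum.cong) (auto simp: eq)
  also have "\<dots> = t $ (inv_into UNIV p i)" using ip by simp
  finally show ?thesis .
qed

definition tk :: "nat \<Rightarrow> nat \<Rightarrow> bit vec" where
  "tk r k = vec r (\<lambda>i. if i < k then 1 else 0)"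

lemma J_block_outer:
  assumes "k \<le> r"
  shows "J_block r k = outer r (tk r k)"
  by (rule eq_matI) (use assms in \<open>auto simp: J_block_def outer_def tk_def\<close>)

lemma J_conj:
  assumes p: "p permutes {..<r}" and kr: "k \<le> r" and u: "u \<in> carrier_vec r"
    and supp: "p ` {..<k} = {i \<in> {..<r}. u $ i = 1}"
    and Q: "Q = mat r r (\<lambda>(i,j). if i = p j then 1 else 0)"
  shows "Q * J_block r k * transpose_mat Q = outer r u"
proof -
  have Qc: "Q \<in> carrier_mat r r" unfolding Q by simp
  have "Q * J_block r k * transpose_mat Q = transpose_mat (transpose_mat Q) * outer r (tk r k) * transpose_mat Q"
    using J_block_outer[OF kr] by simp
  also have "\<dots> = outer r (Q *\<^sub>v tk r k)"
    using outer_conj[of "transpose_mat Q" r "tk r k"] Qc by (simp add: tk_def)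
  also have "Q *\<^sub>v tk r k = u"
  proof (rule eq_vecI)
    fix i assume "i < dim_vec u"
    hence i: "i < r" using u by simp
    have ip: "inv_into UNIV p i < r" using permutes_in_image[OF permutes_inv[OF p]] i by simp
    have "(Q *\<^sub>v tk r k) $ i = tk r k $ (inv_into UNIV p i)"
      unfolding Q using perm_mat_vec[OF p _ i, of "tk r k"] by (simp add: tk_def)
    also have "\<dots> = (if inv_into UNIV p i < k then 1 else 0)" using ip by (simp add: tk_def)
    also have "(inv_into UNIV p i < k) \<longleftrightarrow> u $ i = 1"
    proof -
      have "(inv_into UNIV p i < k) \<longleftrightarrow> i \<in> p ` {..<k}"
        using permutes_inverses[OF p] ip by (metis image_iff lessThan_iff)
      also have "\<dots> \<longleftrightarrow> u $ i = 1" using supp i by auto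
      finally show ?thesis .
    qed
    finally show "(Q *\<^sub>v tk r k) $ i = u $ i" by (cases "u $ i") auto
  qed (use u Qc in auto)
  finally show ?thesis .
qed




lemma indep_of_inj:
  fixes Y :: "bit mat"
  assumes Y: "Y \<in> carrier_mat n r" and inj: "\<And>a. a \<in> carrier_vec r \<Longrightarrow> Y *\<^sub>v a = 0\<^sub>v n \<Longrightarrow> a = 0\<^sub>v r"
  shows "lin_indep_family n r (\<lambda>i. col Y i)"
proof -
  interpret V: vec_space "TYPE(bit)" n .
  have cc: "\<forall>i<r. col Y i \<in> carrier_vec n" using Y by (simp add: col_def)
  have injc: "inj_on (\<lambda>i. col Y i) {..<r}"
  proof (rule inj_onI, rule ccontr)
    fix i j assume ij: "i \<in> {..<r}" "j \<in> {..<r}" "col Y i = col Y j" "i \<noteq> j"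
    define a :: "bit vec" where "a = unit_vec r i + unit_vec r j"
    have a: "a \<in> carrier_vec r" unfolding a_def by simp
    have "a $ i = 1" using ij unfolding a_def by simp
    hence anz: "a \<noteq> 0\<^sub>v r" using ij by auto
    have "Y *\<^sub>v a = 0\<^sub>v n"
    proof (rule eq_vecI)
      fix m assume "m < dim_vec (0\<^sub>v n :: bit vec)"
      hence m: "m < n" by simp
      have "(Y *\<^sub>v a) $ m = row Y m \<bullet> unit_vec r i + row Y m \<bullet> unit_vec r j"
        using m Y ij unfolding a_def by (simp add: scalar_prod_add_distrib[of _ r])
      also have "\<dots> = col Y i $ m + col Y j $ m" using m Y ij(1,2) by simp
      also have "\<dots> = col Y i $ m + col Y i $ m" using ij(3) by simp
      also have "\<dots> = 0" by (rule bit_add_self)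
      finally show "(Y *\<^sub>v a) $ m = 0\<^sub>v n $ m" using m by simp
    qed (use Y in simp)
    thus False using inj[OF a] anz by simp
  qed
  have setc: "set (cols Y) = (\<lambda>i. col Y i) ` {..<r}" using Y by (auto simp: cols_def)
  have dc: "distinct (cols Y)" using injc Y by (simp add: cols_def distinct_map atLeast0LessThan)
  have "\<not> V.lin_dep (set (cols Y))"
  proof
    assume "V.lin_dep (set (cols Y))"
    then obtain a where "a \<in> carrier_vec r" "a \<noteq> 0\<^sub>v r" "Y *\<^sub>v a = 0\<^sub>v n"
      using V.lin_depE[OF Y _ dc] by blast
    thus False using inj by blast
  qed
  thus ?thesis unfolding lin_indep_family_def using cc injc setc by simp
qed

lemma conj_assoc:
  fixes X :: "bit mat"
  assumes X: "X \<in> carrier_mat n r" and P: "P \<in> carrier_mat r r" and B: "B \<in> carrier_mat n n"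
  shows "transpose_mat (X * P) * (B * (X * P)) = transpose_mat P * (transpose_mat X * (B * X)) * P"
proof -
  have Xt: "transpose_mat X \<in> carrier_mat r n" and Pt: "transpose_mat P \<in> carrier_mat r r" using X P by auto
  have "transpose_mat (X * P) * (B * (X * P)) = (transpose_mat P * transpose_mat X) * ((B * X) * P)"
    using transpose_mult[OF X P] assoc_mult_mat[OF B X P] by simp
  also have "\<dots> = transpose_mat P * (transpose_mat X * (B * X)) * P"
    using assoc4[OF Pt Xt mult_carrier_mat[OF B X] P] by simp
  finally show ?thesis .
qed

lemma gram_XP:
  fixes X :: "bit mat"
  assumes A: "A \<in> SGL n" and X: "X \<in> carrier_mat n r" and P: "P \<in> carrier_mat r r"
    and v: "v \<in> carrier_vec r" and G: "transpose_mat X * (inv_of n A * X) = outer r v"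
    and y: "\<forall>i<r. y i = col (X * P) i"
  shows "gram n A r y = outer r (transpose_mat P *\<^sub>v v)"
proof -
  have XP: "X * P \<in> carrier_mat n r" using X P by simp
  have yc: "\<forall>i<r. y i \<in> carrier_vec n" using y XP X by (simp add: col_def)
  have "colmat n r y = colmat n r (\<lambda>i. col (X * P) i)"
    unfolding colmat_def using y by (intro eq_matI) auto
  also have "\<dots> = X * P" using colmat_col[OF XP] .
  finally have cy: "colmat n r y = X * P" .
  have "gram n A r y = transpose_mat (X * P) * (inv_of n A * (X * P))"
    using gram_eq[OF yc A] cy by simp
  also have "\<dots> = transpose_mat P * outer r v * P"
    using conj_assoc[OF X P inv_of_props(1)[OF A]] G by simp
  also have "\<dots> = outer r (transpose_mat P *\<^sub>v v)" using outer_conj[OF P v] .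
  finally show ?thesis .
qed





theorem lemma4p9:
  fixes n r :: nat and A :: "bit mat" and x :: "nat \<Rightarrow> bit vec"
  assumes A: "A \<in> SGL n"
    and x_indep: "lin_indep_family n r x"
    and r: "2 \<le> r" "r \<le> n"
    and rank1: "mat_rank (gram n A r x) = 1"
    and tr0: "mat_trace (gram n A r x) = 0"
    and zero_entry: "\<exists>i<r. \<exists>j<r. gram n A r x $$ (i,j) = 0"
  shows "(\<forall>k. even k \<and> 2 \<le> k \<and> k \<le> r - 1 \<longrightarrow>
            (\<exists>y Q. lin_indep_family n r y \<and> Q \<in> carrier_mat r r \<and> permutation_mat r Q \<and>
               outer_sum n r x = outer_sum n r y \<and> vec_sum n r x = vec_sum n r y \<and>
               gram n A r y = Q * J_block r k * transpose_mat Q))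
       \<and> (\<forall>y. (\<forall>i<r. y i \<in> carrier_vec n) \<and> outer_sum n r x = outer_sum n r y \<longrightarrow>
            mat_rank (gram n A r y) = 1 \<and> mat_trace (gram n A r y) = 0 \<and>
            (\<exists>i'<r. \<exists>j'<r. gram n A r y $$ (i',j') = 0))"
proof -
  have xc: "\<forall>i<r. x i \<in> carrier_vec n" using x_indep unfolding lin_indep_family_def by auto
  define X where "X = colmat n r x"
  define B where "B = inv_of n A"
  have Xc: "X \<in> carrier_mat n r" unfolding X_def by simp
  have Bc: "B \<in> carrier_mat n n" and Bs: "transpose_mat B = B"
    unfolding B_def using inv_of_props[OF A] by auto
  have Geq: "gram n A r x = transpose_mat X * (B * X)" unfolding X_def B_def using gram_eq[OF xc A] .
  have Gc: "gram n A r x \<in> carrier_mat r r" using Geq Xc Bc by simp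
  obtain L where L: "L \<in> carrier_mat r n" "L * X = 1\<^sub>m r" using dual_exists[OF x_indep] unfolding X_def by auto
  have Gsym: "gram n A r x $$ (i,j) = gram n A r x $$ (j,i)" if "i < r" "j < r" for i j
    unfolding Geq using gram_sym[OF Xc Bc Bs that] .
  obtain v where v: "v \<in> carrier_vec r" "v \<noteq> 0\<^sub>v r" and Gv: "gram n A r x = outer r v"
    using rank1_outer[OF Gc Gsym rank1] by blast
  have XBX: "transpose_mat X * (inv_of n A * X) = outer r v" using Geq Gv unfolding B_def by simp
  have sv: "(\<Sum>i<r. v $ i) = 0" using tr0 unfolding Gv trace_outer .
  obtain i0 where i0: "i0 < r" "v $ i0 = 0"
  proof -
    from zero_entry obtain i j where ij: "i < r" "j < r" "v $ i * v $ j = 0"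
      unfolding Gv outer_def by auto
    hence "v $ i = 0 \<or> v $ j = 0" by (cases "v $ i"; cases "v $ j") auto
    thus ?thesis using that ij by blast
  qed
  have ev: "even (wt r v)" using sv unfolding sum_wt of_nat_bit by (auto split: if_splits)
  obtain j1 where j1: "j1 < r" "v $ j1 = 1" using nonzero_vec_ex[OF v] by auto
  have "wt r v \<ge> 1"
  proof -
    have "{j1} \<subseteq> {i \<in> {..<r}. v $ i = 1}" using j1 by auto
    hence "card {j1} \<le> wt r v" unfolding wt_def by (intro card_mono) auto
    thus ?thesis by simp
  qed
  hence wt2: "wt r v \<ge> 2" using ev by presburger
  have wtr: "wt r v < r"
  proof -
    have "{i \<in> {..<r}. v $ i = 1} \<subseteq> {..<r} - {i0}" using i0 by auto
    hence "wt r v \<le> card ({..<r} - {i0})" unfolding wt_def by (intro card_mono) auto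
    thus ?thesis using i0 by simp
  qed
  have XXt: "outer_sum n r x = X * transpose_mat X" unfolding X_def using outer_sum_eq[OF xc] .
  have XPinj: "a = 0\<^sub>v r" if P: "P \<in> carrier_mat r r" "transpose_mat P * P = 1\<^sub>m r"
    and a: "a \<in> carrier_vec r" "(X * P) *\<^sub>v a = 0\<^sub>v n" for P a
  proof -
    have "X *\<^sub>v (P *\<^sub>v a) = 0\<^sub>v n" using a Xc P by simp
    hence l0: "L *\<^sub>v (X *\<^sub>v (P *\<^sub>v a)) = 0\<^sub>v r" using L by simp
    have Pac: "P *\<^sub>v a \<in> carrier_vec r" using P a by simp
    have "P *\<^sub>v a = (L * X) *\<^sub>v (P *\<^sub>v a)" using L(2) Pac by simp
    also have "\<dots> = L *\<^sub>v (X *\<^sub>v (P *\<^sub>v a))" using assoc_mult_mat_vec[OF L(1) Xc Pac] .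
    finally have Pa: "P *\<^sub>v a = 0\<^sub>v r" using l0 by simp
    have "a = (transpose_mat P * P) *\<^sub>v a" by (simp only: P(2) one_mult_mat_vec[OF a(1)])
    also have "\<dots> = transpose_mat P *\<^sub>v (P *\<^sub>v a)" by (rule assoc_mult_mat_vec) (use P a in auto)
    also have "\<dots> = 0\<^sub>v r" using Pa P by simp
    finally show ?thesis .
  qed
  show ?thesis
  proof (rule conjI; intro allI impI)
    fix k assume k: "even k \<and> 2 \<le> k \<and> k \<le> r - 1"
    have kr: "k < r" using k r by linarith
    obtain R where R: "orth r R" "wt r (R *\<^sub>v v) = k"
      using reach_k[of k r v] k kr v ev wt2 wtr by auto
    have Rc: "R \<in> carrier_mat r r" and RR: "R * transpose_mat R = 1\<^sub>m r" "transpose_mat R * R = 1\<^sub>m r"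
      using R(1) unfolding orth_def by auto
    define P where "P = transpose_mat R"
    have Pc: "P \<in> carrier_mat r r" and PtR: "transpose_mat P = R" unfolding P_def using Rc by auto
    have PP: "P * transpose_mat P = 1\<^sub>m r" "transpose_mat P * P = 1\<^sub>m r" using RR PtR unfolding P_def by auto
    define Y where "Y = X * P"
    have Yc: "Y \<in> carrier_mat n r" unfolding Y_def using Xc Pc by simp
    define y where "y = (\<lambda>i. col Y i)"
    have yc: "\<forall>i<r. y i \<in> carrier_vec n" unfolding y_def using Yc by (simp add: col_def)
    have cy: "colmat n r y = Y" unfolding y_def using colmat_col[OF Yc] .
    have li: "lin_indep_family n r y" unfolding y_def
      by (rule indep_of_inj[OF Yc]) (use XPinj[OF Pc PP(2)] in \<open>auto simp: Y_def\<close>)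
    have os: "outer_sum n r x = outer_sum n r y"
    proof -
      have "outer_sum n r y = Y * transpose_mat Y" using outer_sum_eq[OF yc] cy by simp
      also have "\<dots> = X * (P * transpose_mat P) * transpose_mat X"
        unfolding Y_def using transpose_mult[OF Xc Pc] assoc4[OF Xc Pc _ _, of "transpose_mat P" r "transpose_mat X" n] Pc Xc
        by simp
      also have "\<dots> = X * transpose_mat X" using PP Xc by simp
      finally show ?thesis using XXt by simp
    qed
    have vs: "vec_sum n r x = vec_sum n r y"
    proof -
      have "vec_sum n r y = Y *\<^sub>v ones r" using vec_sum_eq cy by simp
      also have "\<dots> = X *\<^sub>v (P *\<^sub>v ones r)" unfolding Y_def using Xc Pc by (simp add: ones_def)
      also have "\<dots> = X *\<^sub>v ones r" using ones_fix[OF Pc PP(1)] by simp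
      finally show ?thesis unfolding X_def using vec_sum_eq by simp
    qed
    have gy: "gram n A r y = outer r (R *\<^sub>v v)"
      using gram_XP[OF A Xc Pc v(1) XBX] PtR unfolding y_def Y_def by simp
    define u where "u = R *\<^sub>v v"
    have uc: "u \<in> carrier_vec r" unfolding u_def using Rc v by simp
    obtain p where p: "p permutes {..<r}" "p ` {..<k} = {i \<in> {..<r}. u $ i = 1}"
      using perm_exists[of "{i \<in> {..<r}. u $ i = 1}" r k] R(2) kr unfolding u_def wt_def by auto
    define Q where "Q = mat r r (\<lambda>(i,j). if i = p j then 1 else (0::bit))"
    have Qc: "Q \<in> carrier_mat r r" unfolding Q_def by simp
    have Qp: "permutation_mat r Q" unfolding permutation_mat_def Q_def using p(1) by blast
    have "gram n A r y = Q * J_block r k * transpose_mat Q"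
      using J_conj[OF p(1) _ uc p(2) Q_def] kr gy unfolding u_def by simp
    thus "\<exists>y Q. lin_indep_family n r y \<and> Q \<in> carrier_mat r r \<and> permutation_mat r Q \<and>
               outer_sum n r x = outer_sum n r y \<and> vec_sum n r x = vec_sum n r y \<and>
               gram n A r y = Q * J_block r k * transpose_mat Q"
      using li Qc Qp os vs by blast
  next
    fix y assume yass: "(\<forall>i<r. y i \<in> carrier_vec n) \<and> outer_sum n r x = outer_sum n r y"
    have yc: "\<forall>i<r. y i \<in> carrier_vec n" using yass by simp
    define Y where "Y = colmat n r y"
    have Yc: "Y \<in> carrier_mat n r" unfolding Y_def by simp
    have "X * transpose_mat X = Y * transpose_mat Y"
      using XXt outer_sum_eq[OF yc] yass unfolding Y_def by simp
    then obtain P where P: "P \<in> carrier_mat r r" "Y = X * P" "P * transpose_mat P = 1\<^sub>m r"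
      "transpose_mat P * P = 1\<^sub>m r"
      using orth_factor[OF Xc Yc L] by blast
    have ycol: "\<forall>i<r. y i = col (X * P) i" using col_colmat yc P(2) unfolding Y_def by metis
    define h where "h = transpose_mat P *\<^sub>v v"
    have hc: "h \<in> carrier_vec r" unfolding h_def using P v by simp
    have gy: "gram n A r y = outer r h" unfolding h_def using gram_XP[OF A Xc P(1) v(1) XBX ycol] .
    have Ph: "P *\<^sub>v h = v"
    proof -
      have "P *\<^sub>v h = (P * transpose_mat P) *\<^sub>v v" unfolding h_def
        by (rule assoc_mult_mat_vec[symmetric]) (use P v in auto)
      thus ?thesis by (simp only: P(3) one_mult_mat_vec[OF v(1)])
    qed
    have hnz: "h \<noteq> 0\<^sub>v r"
    proof
      assume "h = 0\<^sub>v r"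
      hence "v = 0\<^sub>v r" using Ph P by simp
      thus False using v by simp
    qed
    have rk: "mat_rank (gram n A r y) = 1" unfolding gy using rank_outer[OF hc hnz] .
    have trh: "mat_trace (gram n A r y) = 0"
      unfolding gy trace_outer h_def using sum_conj[OF P(1) P(3) v(1)] sv by simp
    have "\<exists>i'<r. h $ i' = 0"
    proof (rule ccontr)
      assume "\<not> ?thesis"
      hence "\<forall>i<r. h $ i = 1" by auto
      hence "h = ones r" using hc by (intro eq_vecI) (auto simp: ones_def)
      hence "v = ones r" using Ph ones_fix[OF P(1) P(3)] by simp
      thus False using i0 by (simp add: ones_def)
    qed
    then obtain i' where i': "i' < r" "h $ i' = 0" by auto
    have "gram n A r y $$ (i',i') = 0" unfolding gy outer_def using i' by simp
    thus "mat_rank (gram n A r y) = 1 \<and> mat_trace (gram n A r y) = 0 \<and>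
            (\<exists>i'<r. \<exists>j'<r. gram n A r y $$ (i',j') = 0)"
      using rk trh i' by blast
  qed
qed

end
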